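(* Let $\nu$ be a lattice path from $(0,0)$ to $(\ell-n,n)$ with $n\ge 1$, let $f_0$ be the largest index with $b_{f_0}(\nu)=0$, let $\nu^{\#}$ be the path obtained from $\nu$ by deleting its first $f_0+1$ steps (translated to start at the origin), and for $\vec{\mathsf b}=(\mathsf b_0,\dots,\mathsf b_\ell)\in\mathrm{Vec}(\nu)$ let $\vec{\mathsf b}^{\#}=(\mathsf b_{f_0+1}-1,\mathsf b_{f_0+2}-1,\dots,\mathsf b_\ell-1)$, which lies in $\mathrm{Vec}(\nu^{\#})$. If $\vec{\mathsf b}$ is $t$-$\mathsf{Pop}$-sortable in $\mathrm{Vec}(\nu)$, then $\vec{\mathsf b}^{\#}$ is $t$-$\mathsf{Pop}$-sortable in $\mathrm{Vec}(\nu^{\#})$.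
   Context: Lattice paths use unit steps N$=(0,1)$, E$=(1,0)$. For a path $\nu$ with $\ell$ steps from $(0,0)$ to $(\ell-n,n)$, $\mathbf b(\nu)=(b_0(\nu),\dots,b_\ell(\nu))$ lists the heights ($y$-coordinates) of the successive lattice points of $\nu$, and $f_k$ ($0\le k\le n$) is the largest index with $b_{f_k}(\nu)=k$. $\mathrm{Vec}(\nu)$ is the set of integer vectors $(\mathsf b_0,\dots,\mathsf b_\ell)$ such that (1) $\mathsf b_{f_k}=k$ for all $k=0,\dots,n$; (2) $b_i(\nu)\le\mathsf b_i\le n$ for all $i$; (3) if $\mathsf b_i=k$ then $\mathsf b_j\le k$ for all $i+1\le j\le f_k$. With the componentwise order, $\mathrm{Vec}(\nu)$ is a finite lattice (isomorphic to the $\nu$-Tamari lattice $\mathrm{Tam}(\nu)$) with minimum $\hat 0$. For a finite lattice $M$, $\mathsf{Pop}_M(x)=\bigwedge(\{y: y\lessdot x\}\cup\{x\})$, and $x$ is $t$-$\mathsf{Pop}$-sortable if $\mathsf{Pop}_M^t(x)=\hat 0$. *)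

theory Defs
  imports Main
begin

text \<open>A lattice path is a list of steps: True = north step N, False = east step E.
  A path with l steps and n north steps goes from (0,0) to (l-n,n).\<close>

definition nsteps :: "bool list \<Rightarrow> nat" where
  "nsteps \<nu> = length (filter id \<nu>)"

definition height :: "bool list \<Rightarrow> nat \<Rightarrow> nat" where
  "height \<nu> i = length (filter id (take i \<nu>))"

definition fidx :: "bool list \<Rightarrow> nat \<Rightarrow> nat" where
  "fidx \<nu> k = (GREATEST i. i \<le> length \<nu> \<and> height \<nu> i = k)"

definition Vec :: "bool list \<Rightarrow> int list set" where
  "Vec \<nu> = {bb. length bb = length \<nu> + 1
      \<and> (\<forall>k\<le>nsteps \<nu>. bb ! fidx \<nu> k = int k)
      \<and> (\<forall>i\<le>length \<nu>. int (height \<nu> i) \<le> bb ! i \<and> bb ! i \<le> int (nsteps \<nu>))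
      \<and> (\<forall>i\<le>length \<nu>. \<forall>k\<le>nsteps \<nu>. bb ! i = int k \<longrightarrow>
             (\<forall>j. i + 1 \<le> j \<and> j \<le> fidx \<nu> k \<longrightarrow> bb ! j \<le> int k))}"

definition vle :: "int list \<Rightarrow> int list \<Rightarrow> bool" where
  "vle xs ys \<longleftrightarrow> length xs = length ys \<and> (\<forall>i<length xs. xs ! i \<le> ys ! i)"

definition vlt :: "int list \<Rightarrow> int list \<Rightarrow> bool" where
  "vlt xs ys \<longleftrightarrow> vle xs ys \<and> xs \<noteq> ys"

definition covby :: "int list set \<Rightarrow> int list \<Rightarrow> int list \<Rightarrow> bool" where
  "covby S y x \<longleftrightarrow> y \<in> S \<and> x \<in> S \<and> vlt y x \<and> \<not> (\<exists>z\<in>S. vlt y z \<and> vlt z x)"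

definition meet :: "int list set \<Rightarrow> int list set \<Rightarrow> int list" where
  "meet S A = (THE m. m \<in> S \<and> (\<forall>a\<in>A. vle m a) \<and>
                  (\<forall>z\<in>S. (\<forall>a\<in>A. vle z a) \<longrightarrow> vle z m))"

definition bottom :: "int list set \<Rightarrow> int list" where
  "bottom S = (THE m. m \<in> S \<and> (\<forall>z\<in>S. vle m z))"

definition Pop :: "int list set \<Rightarrow> int list \<Rightarrow> int list" where
  "Pop S x = meet S ({y. covby S y x} \<union> {x})"

definition pop_sortable :: "int list set \<Rightarrow> nat \<Rightarrow> int list \<Rightarrow> bool" where
  "pop_sortable S t x \<longleftrightarrow> (Pop S ^^ t) x = bottom S"

definition path_sharp :: "bool list \<Rightarrow> bool list" where
  "path_sharp \<nu> = drop (fidx \<nu> 0 + 1) \<nu>"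

definition vec_sharp :: "bool list \<Rightarrow> int list \<Rightarrow> int list" where
  "vec_sharp \<nu> bb = map (\<lambda>x. x - 1) (drop (fidx \<nu> 0 + 1) bb)"

end

theory Submission imports Defs begin

lemma height_0[simp]: "height \<nu> 0 = 0" by (simp add: height_def)

lemma height_add: "height \<nu> (i + j) = height \<nu> i + height (drop i \<nu>) j"
  by (simp add: height_def take_add)

lemma height_mono: "i \<le> j \<Longrightarrow> height \<nu> i \<le> height \<nu> j"
  using height_add[of \<nu> i "j-i"] by simp

lemma height_le: "height \<nu> i \<le> nsteps \<nu>"
proof -
  have "\<nu> = take i \<nu> @ drop i \<nu>" by simp
  then have "nsteps \<nu> = height \<nu> i + length (filter id (drop i \<nu>))"
    unfolding nsteps_def height_def by (metis filter_append length_append)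
  thus ?thesis by simp
qed

lemma height_len: "height \<nu> (length \<nu>) = nsteps \<nu>" by (simp add: height_def nsteps_def)

lemma height_exists: "k \<le> nsteps \<nu> \<Longrightarrow> \<exists>i \<le> length \<nu>. height \<nu> i = k"
proof (induction \<nu> arbitrary: k)
  case Nil thus ?case by (simp add: nsteps_def)
next
  case (Cons a \<nu>)
  have hs: "height (a#\<nu>) (Suc i) = (if a then 1 else 0) + height \<nu> i" for i by (simp add: height_def)
  show ?case
  proof (cases "k = 0")
    case True thus ?thesis by (intro exI[of _ 0]) simp
  next
    case False
    show ?thesis
    proof (cases a)
      case True
      with Cons.prems False have "k - 1 \<le> nsteps \<nu>" by (simp add: nsteps_def)
      then obtain i where "i \<le> length \<nu>" "height \<nu> i = k - 1" using Cons.IH by blast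
      then show ?thesis using hs[of i] True False by (intro exI[of _ "Suc i"]) simp
    next
      case False
      with Cons.prems have "k \<le> nsteps \<nu>" by (simp add: nsteps_def)
      then obtain i where "i \<le> length \<nu>" "height \<nu> i = k" using Cons.IH by blast
      then show ?thesis using hs[of i] False by (intro exI[of _ "Suc i"]) simp
    qed
  qed
qed

lemma fidx_props: assumes "k \<le> nsteps \<nu>"
  shows "fidx \<nu> k \<le> length \<nu>" "height \<nu> (fidx \<nu> k) = k"
    "\<And>i. i \<le> length \<nu> \<Longrightarrow> height \<nu> i = k \<Longrightarrow> i \<le> fidx \<nu> k"
proof -
  obtain i0 where i0: "i0 \<le> length \<nu>" "height \<nu> i0 = k" using height_exists[OF assms] by blast
  have P: "(\<lambda>i. i \<le> length \<nu> \<and> height \<nu> i = k) (fidx \<nu> k)" unfolding fidx_def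
    by (rule GreatestI_nat[where k=i0 and b="length \<nu>"]) (use i0 in auto)
  then show "fidx \<nu> k \<le> length \<nu>" "height \<nu> (fidx \<nu> k) = k" by auto
  show "i \<le> fidx \<nu> k" if "i \<le> length \<nu>" "height \<nu> i = k" for i unfolding fidx_def
    by (rule Greatest_le_nat[where b="length \<nu>"]) (use that in auto)
qed

locale pth = fixes \<nu> :: "bool list" assumes n1: "nsteps \<nu> \<ge> 1"
begin
abbreviation "f0 \<equiv> fidx \<nu> 0"
abbreviation "\<mu> \<equiv> drop (f0+1) \<nu>"

lemma f0_le: "f0 \<le> length \<nu>" and f0_h: "height \<nu> f0 = 0"
  using fidx_props[of 0 \<nu>] by auto

lemma f0_lt: "f0 < length \<nu>"
  using f0_le f0_h height_len[of \<nu>] n1 by (cases "f0 = length \<nu>") auto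

lemma h_pre: "i \<le> f0 \<Longrightarrow> height \<nu> i = 0"
  using height_mono[of i f0 \<nu>] f0_h by simp

lemma h_f01: "height \<nu> (f0+1) = 1"
proof -
  have "height \<nu> (f0+1) \<noteq> 0"
    using fidx_props(3)[of 0 \<nu> "f0+1"] f0_lt by auto
  moreover have "height (drop f0 \<nu>) 1 \<le> 1"
    unfolding height_def by (metis length_filter_le length_take min.bounded_iff order.trans)
  ultimately show ?thesis using height_add[of \<nu> f0 1] f0_h by simp
qed

lemma h_post: "height \<nu> (f0+1+m) = 1 + height \<mu> m"
  using height_add[of \<nu> "f0+1" m] h_f01 by simp

lemma len_mu: "length \<mu> = length \<nu> - f0 - 1" by simp

lemma n_mu: "nsteps \<mu> = nsteps \<nu> - 1"
proof -
  have "length \<nu> = f0 + 1 + length \<mu>" using f0_lt by simp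
  then have "nsteps \<nu> = 1 + height \<mu> (length \<mu>)" using h_post[of "length \<mu>"] height_len[of \<nu>] by metis
  thus ?thesis using height_len[of \<mu>] by simp
qed

lemma fidx_suc: assumes "k \<le> nsteps \<nu> - 1" shows "fidx \<nu> (Suc k) = f0 + 1 + fidx \<mu> k"
proof -
  have k: "k \<le> nsteps \<mu>" using assms n_mu by simp
  define g where "g = f0 + 1 + fidx \<mu> k"
  have gl: "g \<le> length \<nu>" using fidx_props(1)[OF k] f0_lt unfolding g_def by simp
  have gh: "height \<nu> g = Suc k" using fidx_props(2)[OF k] h_post unfolding g_def by simp
  have sk: "Suc k \<le> nsteps \<nu>" using assms n1 by simp
  have 1: "g \<le> fidx \<nu> (Suc k)" using fidx_props(3)[OF sk gl gh] .
  define F where "F = fidx \<nu> (Suc k)"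
  have Fl: "F \<le> length \<nu>" and Fh: "height \<nu> F = Suc k" using fidx_props[OF sk] unfolding F_def by auto
  have "\<not> F \<le> f0" using h_pre Fh by auto
  then obtain m where m: "F = f0 + 1 + m" by (metis add_Suc less_imp_Suc_add not_le add.commute Suc_eq_plus1)
  have "m \<le> length \<mu>" using Fl m by simp
  moreover have "height \<mu> m = k" using Fh h_post m by simp
  ultimately have "m \<le> fidx \<mu> k" using fidx_props(3)[OF k] by blast
  then have "F \<le> g" using m g_def by simp
  thus ?thesis using 1 F_def g_def by simp
qed

end

lemma vle_refl[simp]: "vle x x" by (simp add: vle_def)
lemma vle_trans: "vle x y \<Longrightarrow> vle y z \<Longrightarrow> vle x z" unfolding vle_def by (metis order.trans)
lemma vle_antisym: "vle x y \<Longrightarrow> vle y x \<Longrightarrow> x = y" unfolding vle_def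
  by (metis nth_equalityI order.antisym)

context pth begin

lemma sh_len: "length bb = length \<nu> + 1 \<Longrightarrow> length (vec_sharp \<nu> bb) = length \<mu> + 1"
  using f0_lt by (simp add: vec_sharp_def)

lemma sh_nth: "length bb = length \<nu> + 1 \<Longrightarrow> m \<le> length \<mu> \<Longrightarrow> vec_sharp \<nu> bb ! m = bb ! (f0+1+m) - 1"
  using f0_lt by (simp add: vec_sharp_def)

lemma sh_Vec: assumes "bb \<in> Vec \<nu>" shows "vec_sharp \<nu> bb \<in> Vec \<mu>"
proof -
  have len: "length bb = length \<nu> + 1"
    and c1: "\<And>k. k \<le> nsteps \<nu> \<Longrightarrow> bb ! fidx \<nu> k = int k"
    and c2: "\<And>i. i \<le> length \<nu> \<Longrightarrow> int (height \<nu> i) \<le> bb ! i \<and> bb ! i \<le> int (nsteps \<nu>)"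
    and c3: "\<And>i k j. i \<le> length \<nu> \<Longrightarrow> k \<le> nsteps \<nu> \<Longrightarrow> bb ! i = int k \<Longrightarrow> i + 1 \<le> j \<Longrightarrow> j \<le> fidx \<nu> k \<Longrightarrow> bb ! j \<le> int k"
    using assms unfolding Vec_def by auto
  have nm: "nsteps \<mu> = nsteps \<nu> - 1" by (rule n_mu)
  show ?thesis unfolding Vec_def mem_Collect_eq
  proof (intro conjI allI impI)
    show "length (vec_sharp \<nu> bb) = length \<mu> + 1" using sh_len[OF len] .
  next
    fix k assume k: "k \<le> nsteps \<mu>"
    have "fidx \<mu> k \<le> length \<mu>" using fidx_props(1)[OF k] .
    then have "vec_sharp \<nu> bb ! fidx \<mu> k = bb ! fidx \<nu> (Suc k) - 1"
      using sh_nth[OF len] fidx_suc[of k] k nm by simp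
    also have "\<dots> = int k" using c1[of "Suc k"] k nm n1 by simp
    finally show "vec_sharp \<nu> bb ! fidx \<mu> k = int k" .
  next
    fix i assume i: "i \<le> length \<mu>"
    have il: "f0 + 1 + i \<le> length \<nu>" using i f0_lt by simp
    show "int (height \<mu> i) \<le> vec_sharp \<nu> bb ! i"
      using c2[OF il] h_post[of i] sh_nth[OF len i] by simp
    show "vec_sharp \<nu> bb ! i \<le> int (nsteps \<mu>)"
      using c2[OF il] nm n1 sh_nth[OF len i] by simp
  next
    fix i k j assume i: "i \<le> length \<mu>" and k: "k \<le> nsteps \<mu>"
      and e: "vec_sharp \<nu> bb ! i = int k" and j: "i + 1 \<le> j \<and> j \<le> fidx \<mu> k"
    have il: "f0 + 1 + i \<le> length \<nu>" using i f0_lt by simp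
    have jl: "j \<le> length \<mu>" using j fidx_props(1)[OF k] by simp
    have "bb ! (f0+1+j) \<le> int (Suc k)"
      apply (rule c3[OF il, of "Suc k"])
      using k nm n1 e sh_nth[OF len i] j fidx_suc[of k] by auto
    then show "vec_sharp \<nu> bb ! j \<le> int k" using sh_nth[OF len jl] by simp
  qed
qed

definition lift :: "int list \<Rightarrow> int list \<Rightarrow> int list" where
  "lift x z = take (f0+1) x @ map (\<lambda>v. v+1) z"

lemma lift_len: "length x = length \<nu> + 1 \<Longrightarrow> length z = length \<mu> + 1 \<Longrightarrow> length (lift x z) = length \<nu> + 1"
  using f0_lt by (simp add: lift_def)

lemma lift_pre: "length x = length \<nu> + 1 \<Longrightarrow> i \<le> f0 \<Longrightarrow> lift x z ! i = x ! i"
  using f0_lt by (simp add: lift_def nth_append)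

lemma lift_post: "length x = length \<nu> + 1 \<Longrightarrow> m < length z \<Longrightarrow> lift x z ! (f0+1+m) = z ! m + 1"
  using f0_lt by (simp add: lift_def nth_append)

lemma lift_sh: "length x = length \<nu> + 1 \<Longrightarrow> vec_sharp \<nu> (lift x z) = z"
  using f0_lt by (simp add: lift_def vec_sharp_def comp_def)

lemma split_idx: "i \<le> length \<nu> \<Longrightarrow> \<not> i \<le> f0 \<Longrightarrow> \<exists>m. i = f0 + 1 + m \<and> m \<le> length \<mu>"
  by (rule exI[of _ "i - f0 - 1"]) auto

lemma lift_Vec: assumes x: "x \<in> Vec \<nu>" and z: "z \<in> Vec \<mu>" and le: "vle z (vec_sharp \<nu> x)"
  shows "lift x z \<in> Vec \<nu>"
proof -
  have len: "length x = length \<nu> + 1"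
    and c1: "\<And>k. k \<le> nsteps \<nu> \<Longrightarrow> x ! fidx \<nu> k = int k"
    and c2: "\<And>i. i \<le> length \<nu> \<Longrightarrow> int (height \<nu> i) \<le> x ! i \<and> x ! i \<le> int (nsteps \<nu>)"
    and c3: "\<And>i k j. i \<le> length \<nu> \<Longrightarrow> k \<le> nsteps \<nu> \<Longrightarrow> x ! i = int k \<Longrightarrow> i + 1 \<le> j \<Longrightarrow> j \<le> fidx \<nu> k \<Longrightarrow> x ! j \<le> int k"
    using x unfolding Vec_def by auto
  have zlen: "length z = length \<mu> + 1"
    and d1: "\<And>k. k \<le> nsteps \<mu> \<Longrightarrow> z ! fidx \<mu> k = int k"
    and d2: "\<And>i. i \<le> length \<mu> \<Longrightarrow> int (height \<mu> i) \<le> z ! i \<and> z ! i \<le> int (nsteps \<mu>)"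
    and d3: "\<And>i k j. i \<le> length \<mu> \<Longrightarrow> k \<le> nsteps \<mu> \<Longrightarrow> z ! i = int k \<Longrightarrow> i + 1 \<le> j \<Longrightarrow> j \<le> fidx \<mu> k \<Longrightarrow> z ! j \<le> int k"
    using z unfolding Vec_def by auto
  have zle: "z ! m + 1 \<le> x ! (f0+1+m)" if m: "m \<le> length \<mu>" for m
  proof -
    have "z ! m \<le> vec_sharp \<nu> x ! m" using le zlen m unfolding vle_def by auto
    thus ?thesis using sh_nth[OF len m] by simp
  qed
  have nm: "nsteps \<mu> = nsteps \<nu> - 1" by (rule n_mu)
  have post: "\<And>m. m \<le> length \<mu> \<Longrightarrow> lift x z ! (f0+1+m) = z ! m + 1"
    using lift_post[OF len] zlen by simp
  show ?thesis unfolding Vec_def mem_Collect_eq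
  proof (intro conjI allI impI)
    show "length (lift x z) = length \<nu> + 1" using lift_len[OF len zlen] .
  next
    fix k assume k: "k \<le> nsteps \<nu>"
    show "lift x z ! fidx \<nu> k = int k"
    proof (cases k)
      case 0 thus ?thesis using lift_pre[OF len, of f0] c1[of 0] by simp
    next
      case (Suc k')
      have k': "k' \<le> nsteps \<mu>" using k Suc nm by simp
      have "fidx \<mu> k' \<le> length \<mu>" using fidx_props(1)[OF k'] .
      then show ?thesis using Suc fidx_suc[of k'] k' nm post d1[OF k'] by simp
    qed
  next
    fix i assume i: "i \<le> length \<nu>"
    have "int (height \<nu> i) \<le> lift x z ! i \<and> lift x z ! i \<le> int (nsteps \<nu>)"
    proof (cases "i \<le> f0")
      case True thus ?thesis using lift_pre[OF len True] c2[OF i] by simp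
    next
      case False
      then obtain m where m: "i = f0+1+m" "m \<le> length \<mu>" using split_idx[OF i] by blast
      thus ?thesis using post[of m] d2[of m] h_post[of m] nm n1 by auto
    qed
    thus "int (height \<nu> i) \<le> lift x z ! i" "lift x z ! i \<le> int (nsteps \<nu>)" by auto
  next
    fix i k j assume i: "i \<le> length \<nu>" and k: "k \<le> nsteps \<nu>"
      and e: "lift x z ! i = int k" and j: "i + 1 \<le> j \<and> j \<le> fidx \<nu> k"
    have jl: "j \<le> length \<nu>" using j fidx_props(1)[OF k] by simp
    show "lift x z ! j \<le> int k"
    proof (cases "i \<le> f0")
      case True
      have xi: "x ! i = int k" using e lift_pre[OF len True] by simp
      have xj: "x ! j \<le> int k" using c3[OF i k xi] j by simp
      show ?thesis
      proof (cases "j \<le> f0")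
        case True thus ?thesis using lift_pre[OF len True] xj by simp
      next
        case False
        then obtain m where m: "j = f0+1+m" "m \<le> length \<mu>" using split_idx[OF jl] by blast
        thus ?thesis using post[of m] zle[of m] xj by simp
      qed
    next
      case False
      then obtain m where m: "i = f0+1+m" "m \<le> length \<mu>" using split_idx[OF i] by blast
      have zm: "z ! m + 1 = int k" using e post[OF m(2)] m(1) by simp
      have "0 \<le> z ! m" using d2[OF m(2)] by simp
      then obtain k' where k': "k = Suc k'" using zm by (cases k) auto
      have k'': "k' \<le> nsteps \<mu>" using k k' nm by simp
      have fk: "fidx \<nu> k = f0 + 1 + fidx \<mu> k'" using fidx_suc[of k'] k'' nm k' by simp
      obtain m' where m': "j = f0+1+m'" using j m by (metis add_Suc_right le_Suc_ex le_add1 le_trans add.assoc)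
      have m'l: "m' \<le> length \<mu>" using m' jl f0_lt by simp
      have "z ! m' \<le> int k'"
        apply (rule d3[OF m(2) k''])
        using zm k' m' j fk m by auto
      thus ?thesis using post[OF m'l] m' k' by simp
    qed
  qed
qed

end
declare upt_Suc[simp del]

definition cmin :: "nat \<Rightarrow> int list set \<Rightarrow> int list" where
  "cmin N A = map (\<lambda>i. Min ((\<lambda>a. a!i) ` A)) [0..<N]"

lemma Vec_finite: "finite (Vec \<rho>)"
proof -
  have "Vec \<rho> \<subseteq> {xs. set xs \<subseteq> {0..int (nsteps \<rho>)} \<and> length xs = length \<rho> + 1}"
  proof
    fix bb assume b: "bb \<in> Vec \<rho>"
    have "set bb \<subseteq> {0..int (nsteps \<rho>)}"
    proof
      fix v assume "v \<in> set bb"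
      then obtain i where "i < length bb" "bb ! i = v" by (metis in_set_conv_nth)
      then show "v \<in> {0..int (nsteps \<rho>)}" using b unfolding Vec_def
        by (smt (verit, best) Suc_eq_plus1 less_Suc_eq_le mem_Collect_eq of_nat_0_le_iff atLeastAtMost_iff)
    qed
    then show "bb \<in> {xs. set xs \<subseteq> {0..int (nsteps \<rho>)} \<and> length xs = length \<rho> + 1}"
      using b unfolding Vec_def by auto
  qed
  moreover have "finite {xs. set xs \<subseteq> {0..int (nsteps \<rho>)} \<and> length xs = length \<rho> + 1}"
    by (rule finite_lists_length_eq) simp
  ultimately show ?thesis by (rule finite_subset)
qed

lemma meet_cmin:
  assumes fin: "finite A" and ne: "A \<noteq> {}" and sub: "A \<subseteq> Vec \<rho>"
  shows "meet (Vec \<rho>) A = cmin (length \<rho> + 1) A \<and> cmin (length \<rho> + 1) A \<in> Vec \<rho>"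
proof -
  let ?m = "cmin (length \<rho> + 1) A"
  have lenA: "\<And>a. a \<in> A \<Longrightarrow> length a = length \<rho> + 1" using sub unfolding Vec_def by auto
  have mnth: "\<And>i. i < length \<rho> + 1 \<Longrightarrow> ?m ! i = Min ((\<lambda>a. a!i) ` A)" by (simp add: cmin_def)
  have mlen: "length ?m = length \<rho> + 1" by (simp add: cmin_def)
  have fin': "\<And>i. finite ((\<lambda>a. a!i) ` A)" using fin by simp
  have ne': "\<And>i. (\<lambda>a. a!i) ` A \<noteq> {}" using ne by simp
  have att: "\<And>i. \<exists>a\<in>A. Min ((\<lambda>a. a!i) ` A) = a ! i"
    using Min_in[OF fin' ne'] by force
  have lower: "\<And>i a. a \<in> A \<Longrightarrow> Min ((\<lambda>a. a!i) ` A) \<le> a ! i" using fin' by simp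
  have mV: "?m \<in> Vec \<rho>" unfolding Vec_def mem_Collect_eq
  proof (intro conjI allI impI)
    show "length ?m = length \<rho> + 1" by (rule mlen)
  next
    fix k assume k: "k \<le> nsteps \<rho>"
    have fl: "fidx \<rho> k < length \<rho> + 1" using fidx_props(1)[OF k] by simp
    have "\<forall>a\<in>A. a ! fidx \<rho> k = int k" using sub k unfolding Vec_def by auto
    then have "(\<lambda>a. a ! fidx \<rho> k) ` A = {int k}" using ne by auto
    then show "?m ! fidx \<rho> k = int k" using mnth[OF fl] by simp
  next
    fix i assume i: "i \<le> length \<rho>"
    have il: "i < length \<rho> + 1" using i by simp
    obtain a where a: "a \<in> A" "?m ! i = a ! i" using att[of i] mnth[OF il] by auto
    show "?m ! i \<le> int (nsteps \<rho>)" using a sub i unfolding Vec_def by auto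
    have "\<forall>a\<in>A. int (height \<rho> i) \<le> a ! i" using sub i unfolding Vec_def by auto
    then show "int (height \<rho> i) \<le> ?m ! i" using mnth[OF il] Min_ge_iff[OF fin' ne'] by auto
  next
    fix i k j assume i: "i \<le> length \<rho>" and k: "k \<le> nsteps \<rho>" and e: "?m ! i = int k"
      and j: "i + 1 \<le> j \<and> j \<le> fidx \<rho> k"
    have il: "i < length \<rho> + 1" using i by simp
    have jl: "j < length \<rho> + 1" using j fidx_props(1)[OF k] by simp
    obtain a where a: "a \<in> A" "?m ! i = a ! i" using att[of i] mnth[OF il] by auto
    have "a ! j \<le> int k" using a sub i k e j unfolding Vec_def by auto
    then show "?m ! j \<le> int k" using mnth[OF jl] lower[OF a(1), of j] by simp
  qed
  have lb: "\<forall>a\<in>A. vle ?m a" unfolding vle_def using mlen lenA mnth lower by auto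
  have glb: "\<forall>z\<in>Vec \<rho>. (\<forall>a\<in>A. vle z a) \<longrightarrow> vle z ?m"
  proof (intro ballI impI)
    fix z assume "z \<in> Vec \<rho>" and za: "\<forall>a\<in>A. vle z a"
    then have zl: "length z = length \<rho> + 1" unfolding Vec_def by auto
    show "vle z ?m" unfolding vle_def
    proof (intro conjI allI impI)
      show "length z = length ?m" using zl mlen by simp
      fix i assume "i < length z"
      then have il: "i < length \<rho> + 1" using zl by simp
      have "\<forall>a\<in>A. z ! i \<le> a ! i" using za zl il unfolding vle_def by auto
      then show "z ! i \<le> ?m ! i" using mnth[OF il] Min_ge_iff[OF fin' ne'] by auto
    qed
  qed
  have "meet (Vec \<rho>) A = ?m" unfolding meet_def
  proof (rule the_equality)
    show "?m \<in> Vec \<rho> \<and> (\<forall>a\<in>A. vle ?m a) \<and> (\<forall>z\<in>Vec \<rho>. (\<forall>a\<in>A. vle z a) \<longrightarrow> vle z ?m)"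
      using mV lb glb by blast
    fix m' assume m': "m' \<in> Vec \<rho> \<and> (\<forall>a\<in>A. vle m' a) \<and> (\<forall>z\<in>Vec \<rho>. (\<forall>a\<in>A. vle z a) \<longrightarrow> vle z m')"
    show "m' = ?m" using m' mV lb glb vle_antisym by blast
  qed
  then show ?thesis using mV by simp
qed

definition hts :: "bool list \<Rightarrow> int list" where
  "hts \<rho> = map (\<lambda>i. int (height \<rho> i)) [0..<length \<rho> + 1]"

lemma bottom_hts: "bottom (Vec \<rho>) = hts \<rho>"
proof -
  have hV: "hts \<rho> \<in> Vec \<rho>" unfolding Vec_def mem_Collect_eq hts_def
  proof (intro conjI allI impI)
    fix k assume k: "k \<le> nsteps \<rho>"
    have "fidx \<rho> k < length \<rho> + 1" using fidx_props(1)[OF k] by simp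
    then show "map (\<lambda>i. int (height \<rho> i)) [0..<length \<rho> + 1] ! fidx \<rho> k = int k"
      using fidx_props(2)[OF k] by simp
  next
    fix i k j assume i: "i \<le> length \<rho>" and k: "k \<le> nsteps \<rho>"
      and e: "map (\<lambda>i. int (height \<rho> i)) [0..<length \<rho> + 1] ! i = int k"
      and j: "i + 1 \<le> j \<and> j \<le> fidx \<rho> k"
    have jl: "j < length \<rho> + 1" using j fidx_props(1)[OF k] by simp
    have "height \<rho> j \<le> height \<rho> (fidx \<rho> k)" using height_mono j by simp
    then show "map (\<lambda>i. int (height \<rho> i)) [0..<length \<rho> + 1] ! j \<le> int k"
      using jl fidx_props(2)[OF k] by simp
  qed (auto simp: height_le nth_append)
  have least: "\<forall>z\<in>Vec \<rho>. vle (hts \<rho>) z"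
    unfolding Vec_def vle_def hts_def by auto
  show ?thesis unfolding bottom_def
    by (rule the_equality) (use hV least vle_antisym in blast)+
qed


context pth begin

lemma sh_mono: "length a = length \<nu> + 1 \<Longrightarrow> length b = length \<nu> + 1 \<Longrightarrow> vle a b \<Longrightarrow> vle (vec_sharp \<nu> a) (vec_sharp \<nu> b)"
proof -
  assume al: "length a = length \<nu> + 1" and bl: "length b = length \<nu> + 1" and ab: "vle a b"
  show ?thesis unfolding vle_def
  proof (intro conjI allI impI)
    show "length (vec_sharp \<nu> a) = length (vec_sharp \<nu> b)" using sh_len al bl by simp
    fix i assume "i < length (vec_sharp \<nu> a)"
    then have i: "i \<le> length \<mu>" using sh_len[OF al] by simp
    have "f0 + 1 + i < length a" using i f0_lt al by simp
    then have "a ! (f0+1+i) \<le> b ! (f0+1+i)" using ab unfolding vle_def by simp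
    then show "vec_sharp \<nu> a ! i \<le> vec_sharp \<nu> b ! i" using sh_nth[OF al i] sh_nth[OF bl i] by simp
  qed
qed

lemma lift_le: assumes "length x = length \<nu> + 1" "length z = length \<mu> + 1" "vle z (vec_sharp \<nu> x)"
  shows "vle (lift x z) x"
  unfolding vle_def
proof (intro conjI allI impI)
  show "length (lift x z) = length x" using lift_len assms by simp
  fix i assume i: "i < length (lift x z)"
  show "lift x z ! i \<le> x ! i"
  proof (cases "i \<le> f0")
    case True thus ?thesis using lift_pre assms by simp
  next
    case False
    then obtain m where m: "i = f0+1+m" "m \<le> length \<mu>" using split_idx[of i] i lift_len assms by auto
    have "z ! m \<le> vec_sharp \<nu> x ! m" using assms(3) m assms(2) unfolding vle_def by auto
    then show ?thesis using m lift_post[OF assms(1), of m z] assms(2) sh_nth[OF assms(1) m(2)] by simp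
  qed
qed

lemma lift_mono: assumes "length x = length \<nu> + 1" "length z = length \<mu> + 1" "vle z z'"
  shows "vle (lift x z) (lift x z')"
  unfolding vle_def
proof (intro conjI allI impI)
  have z': "length z' = length \<mu> + 1" using assms unfolding vle_def by simp
  show "length (lift x z) = length (lift x z')" using lift_len assms z' by simp
  fix i assume i: "i < length (lift x z)"
  show "lift x z ! i \<le> lift x z' ! i"
  proof (cases "i \<le> f0")
    case True thus ?thesis using lift_pre assms by simp
  next
    case False
    then obtain m where m: "i = f0+1+m" "m \<le> length \<mu>" using split_idx[of i] i lift_len assms by auto
    have "z ! m \<le> z' ! m" using assms(3) m assms(2) unfolding vle_def by auto
    then show ?thesis using m lift_post[OF assms(1), of m z] lift_post[OF assms(1), of m z'] assms(2) z' by simp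
  qed
qed

lemma agree: assumes "length w = length \<nu> + 1" "length x = length \<nu> + 1" "\<forall>i\<le>f0. w ! i = x ! i"
  shows "w = lift x (vec_sharp \<nu> w)"
proof (rule nth_equalityI)
  show "length w = length (lift x (vec_sharp \<nu> w))" using lift_len assms sh_len by simp
  fix i assume i: "i < length w"
  show "w ! i = lift x (vec_sharp \<nu> w) ! i"
  proof (cases "i \<le> f0")
    case True thus ?thesis using lift_pre assms by simp
  next
    case False
    then obtain m where m: "i = f0+1+m" "m \<le> length \<mu>" using split_idx[of i] i assms by auto
    then show ?thesis using lift_post[OF assms(2), of m] sh_len[OF assms(1)] sh_nth[OF assms(1) m(2)] by simp
  qed
qed

lemma VecL: "x \<in> Vec \<rho> \<Longrightarrow> length x = length \<rho> + 1" unfolding Vec_def by auto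

lemma cover_a: assumes x: "x \<in> Vec \<nu>" and c: "covby (Vec \<mu>) z (vec_sharp \<nu> x)"
  shows "covby (Vec \<nu>) (lift x z) x"
proof -
  have xl: "length x = length \<nu> + 1" using VecL[OF x] .
  have zV: "z \<in> Vec \<mu>" and lt: "vlt z (vec_sharp \<nu> x)"
    and nb: "\<not> (\<exists>v\<in>Vec \<mu>. vlt z v \<and> vlt v (vec_sharp \<nu> x))" using c unfolding covby_def by auto
  have zl: "length z = length \<mu> + 1" using VecL[OF zV] .
  have le: "vle z (vec_sharp \<nu> x)" using lt unfolding vlt_def by simp
  have LV: "lift x z \<in> Vec \<nu>" using lift_Vec[OF x zV le] .
  have Lle: "vle (lift x z) x" using lift_le[OF xl zl le] .
  have Lne: "lift x z \<noteq> x" using lift_sh[OF xl, of z] lt unfolding vlt_def by auto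
  have "\<not> (\<exists>w\<in>Vec \<nu>. vlt (lift x z) w \<and> vlt w x)"
  proof
    assume "\<exists>w\<in>Vec \<nu>. vlt (lift x z) w \<and> vlt w x"
    then obtain w where wV: "w \<in> Vec \<nu>" and w1: "vlt (lift x z) w" and w2: "vlt w x" by blast
    have wl: "length w = length \<nu> + 1" using VecL[OF wV] .
    have Ll: "length (lift x z) = length \<nu> + 1" using lift_len[OF xl zl] .
    have pre: "\<forall>i\<le>f0. w ! i = x ! i"
    proof (intro allI impI)
      fix i assume i: "i \<le> f0"
      have il: "i < length w" using i f0_lt wl by simp
      have "lift x z ! i \<le> w ! i" "w ! i \<le> x ! i" using w1 w2 il Ll wl xl unfolding vlt_def vle_def by auto
      then show "w ! i = x ! i" using lift_pre[OF xl i] by simp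
    qed
    have weq: "w = lift x (vec_sharp \<nu> w)" using agree[OF wl xl pre] .
    have s1: "vle z (vec_sharp \<nu> w)" using sh_mono[OF Ll wl] w1 lift_sh[OF xl] unfolding vlt_def by metis
    have s2: "vle (vec_sharp \<nu> w) (vec_sharp \<nu> x)" using sh_mono[OF wl xl] w2 unfolding vlt_def by simp
    have n1': "z \<noteq> vec_sharp \<nu> w" using weq w1 unfolding vlt_def by metis
    have n2': "vec_sharp \<nu> w \<noteq> vec_sharp \<nu> x" using weq w2 lift_sh[OF xl] agree[OF xl xl] unfolding vlt_def by (metis order.refl)
    have "vec_sharp \<nu> w \<in> Vec \<mu>" using sh_Vec[OF wV] .
    then show False using nb s1 s2 n1' n2' unfolding vlt_def by blast
  qed
  then show ?thesis unfolding covby_def vlt_def using LV x Lle Lne by blast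
qed

lemma cover_b: assumes x: "x \<in> Vec \<nu>" and c: "covby (Vec \<nu>) y x" and ne: "vec_sharp \<nu> y \<noteq> vec_sharp \<nu> x"
  shows "covby (Vec \<mu>) (vec_sharp \<nu> y) (vec_sharp \<nu> x)"
proof -
  have xl: "length x = length \<nu> + 1" using VecL[OF x] .
  have yV: "y \<in> Vec \<nu>" and lt: "vlt y x"
    and nb: "\<not> (\<exists>w\<in>Vec \<nu>. vlt y w \<and> vlt w x)" using c unfolding covby_def by auto
  have yl: "length y = length \<nu> + 1" using VecL[OF yV] .
  have yle: "vle y x" using lt unfolding vlt_def by simp
  have sy: "vec_sharp \<nu> y \<in> Vec \<mu>" using sh_Vec[OF yV] .
  have sx: "vec_sharp \<nu> x \<in> Vec \<mu>" using sh_Vec[OF x] .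
  have syl: "length (vec_sharp \<nu> y) = length \<mu> + 1" using sh_len[OF yl] .
  have sle: "vle (vec_sharp \<nu> y) (vec_sharp \<nu> x)" using sh_mono[OF yl xl yle] .
  define w where "w = lift x (vec_sharp \<nu> y)"
  have wV: "w \<in> Vec \<nu>" unfolding w_def using lift_Vec[OF x sy sle] .
  have wl: "length w = length \<nu> + 1" using VecL[OF wV] .
  have ywe: "vle y w" unfolding vle_def
  proof (intro conjI allI impI)
    show "length y = length w" using yl wl by simp
    fix i assume i: "i < length y"
    show "y ! i \<le> w ! i"
    proof (cases "i \<le> f0")
      case True thus ?thesis using lift_pre[OF xl True] yle i unfolding w_def vle_def by auto
    next
      case False
      then obtain m where m: "i = f0+1+m" "m \<le> length \<mu>" using split_idx[of i] i yl by auto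
      then show ?thesis using lift_post[OF xl, of m] syl sh_nth[OF yl m(2)] unfolding w_def by simp
    qed
  qed
  have wx: "vle w x" unfolding w_def using lift_le[OF xl syl sle] .
  have wnx: "w \<noteq> x" using ne lift_sh[OF xl] unfolding w_def by metis
  have wy: "w = y" using nb wV ywe wx wnx unfolding vlt_def by blast
  have "\<not> (\<exists>v\<in>Vec \<mu>. vlt (vec_sharp \<nu> y) v \<and> vlt v (vec_sharp \<nu> x))"
  proof
    assume "\<exists>v\<in>Vec \<mu>. vlt (vec_sharp \<nu> y) v \<and> vlt v (vec_sharp \<nu> x)"
    then obtain v where vV: "v \<in> Vec \<mu>" and v1: "vlt (vec_sharp \<nu> y) v" and v2: "vlt v (vec_sharp \<nu> x)" by blast
    have vl: "length v = length \<mu> + 1" using VecL[OF vV] .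
    have vle': "vle v (vec_sharp \<nu> x)" using v2 unfolding vlt_def by simp
    have LV: "lift x v \<in> Vec \<nu>" using lift_Vec[OF x vV vle'] .
    have a1: "vle y (lift x v)" using lift_mono[OF xl syl] v1 wy unfolding w_def vlt_def by metis
    have a2: "vle (lift x v) x" using lift_le[OF xl vl vle'] .
    have b1: "y \<noteq> lift x v" using v1 lift_sh[OF xl] unfolding vlt_def by metis
    have b2: "lift x v \<noteq> x" using v2 lift_sh[OF xl] unfolding vlt_def by metis
    show False using nb LV a1 a2 b1 b2 unfolding vlt_def by blast
  qed
  then show ?thesis unfolding covby_def vlt_def using sy sx sle ne by blast
qed

lemma img: assumes x: "x \<in> Vec \<nu>"
  shows "vec_sharp \<nu> ` ({y. covby (Vec \<nu>) y x} \<union> {x}) = {z. covby (Vec \<mu>) z (vec_sharp \<nu> x)} \<union> {vec_sharp \<nu> x}"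
proof
  show "vec_sharp \<nu> ` ({y. covby (Vec \<nu>) y x} \<union> {x}) \<subseteq> {z. covby (Vec \<mu>) z (vec_sharp \<nu> x)} \<union> {vec_sharp \<nu> x}"
    using cover_b[OF x] by blast
  show "{z. covby (Vec \<mu>) z (vec_sharp \<nu> x)} \<union> {vec_sharp \<nu> x} \<subseteq> vec_sharp \<nu> ` ({y. covby (Vec \<nu>) y x} \<union> {x})"
  proof
    fix z assume "z \<in> {z. covby (Vec \<mu>) z (vec_sharp \<nu> x)} \<union> {vec_sharp \<nu> x}"
    then consider "covby (Vec \<mu>) z (vec_sharp \<nu> x)" | "z = vec_sharp \<nu> x" by blast
    then show "z \<in> vec_sharp \<nu> ` ({y. covby (Vec \<nu>) y x} \<union> {x})"
    proof cases
      case 1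
      then have "covby (Vec \<nu>) (lift x z) x" using cover_a[OF x] by blast
      moreover have "vec_sharp \<nu> (lift x z) = z" using lift_sh VecL[OF x] by simp
      ultimately show ?thesis by (metis (mono_tags) UnI1 image_eqI mem_Collect_eq)
    qed simp
  qed
qed

lemma sh_cmin: assumes fin: "finite A" and ne: "A \<noteq> {}" and lA: "\<And>a. a \<in> A \<Longrightarrow> length a = length \<nu> + 1"
  shows "vec_sharp \<nu> (cmin (length \<nu> + 1) A) = cmin (length \<mu> + 1) (vec_sharp \<nu> ` A)"
proof (rule nth_equalityI)
  have cl: "length (cmin (length \<nu> + 1) A) = length \<nu> + 1" by (simp add: cmin_def)
  show "length (vec_sharp \<nu> (cmin (length \<nu> + 1) A)) = length (cmin (length \<mu> + 1) (vec_sharp \<nu> ` A))"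
    using sh_len[OF cl] by (simp add: cmin_def)
  fix m assume "m < length (vec_sharp \<nu> (cmin (length \<nu> + 1) A))"
  then have m: "m \<le> length \<mu>" using sh_len[OF cl] by simp
  have i: "f0 + 1 + m < length \<nu> + 1" using m f0_lt by simp
  have "vec_sharp \<nu> (cmin (length \<nu> + 1) A) ! m = Min ((\<lambda>a. a!(f0+1+m)) ` A) - 1"
    using sh_nth[OF cl m] i by (simp add: cmin_def)
  also have "\<dots> = Min ((\<lambda>v. v - 1) ` (\<lambda>a. a!(f0+1+m)) ` A)"
    by (rule mono_Min_commute) (use fin ne in \<open>auto simp: mono_def\<close>)
  also have "(\<lambda>v. v - 1) ` (\<lambda>a. a!(f0+1+m)) ` A = (\<lambda>b. b ! m) ` vec_sharp \<nu> ` A"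
    unfolding image_image using sh_nth[OF lA m] by (intro image_cong) auto
  also have "Min \<dots> = cmin (length \<mu> + 1) (vec_sharp \<nu> ` A) ! m"
    using m by (simp add: cmin_def)
  finally show "vec_sharp \<nu> (cmin (length \<nu> + 1) A) ! m = cmin (length \<mu> + 1) (vec_sharp \<nu> ` A) ! m" .
qed

lemma Pop_sh: assumes x: "x \<in> Vec \<nu>"
  shows "Pop (Vec \<nu>) x \<in> Vec \<nu> \<and> vec_sharp \<nu> (Pop (Vec \<nu>) x) = Pop (Vec \<mu>) (vec_sharp \<nu> x)"
proof -
  define A where "A = {y. covby (Vec \<nu>) y x} \<union> {x}"
  have sub: "A \<subseteq> Vec \<nu>" using x unfolding A_def covby_def by auto
  have fin: "finite A" using Vec_finite sub by (rule finite_subset[rotated])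
  have ne: "A \<noteq> {}" unfolding A_def by simp
  have M: "meet (Vec \<nu>) A = cmin (length \<nu> + 1) A \<and> cmin (length \<nu> + 1) A \<in> Vec \<nu>"
    by (rule meet_cmin[OF fin ne sub])
  have B: "vec_sharp \<nu> ` A = {z. covby (Vec \<mu>) z (vec_sharp \<nu> x)} \<union> {vec_sharp \<nu> x}"
    unfolding A_def by (rule img[OF x])
  have subB: "vec_sharp \<nu> ` A \<subseteq> Vec \<mu>" using sub sh_Vec by blast
  have M2: "meet (Vec \<mu>) (vec_sharp \<nu> ` A) = cmin (length \<mu> + 1) (vec_sharp \<nu> ` A)"
    using meet_cmin[of "vec_sharp \<nu> ` A" \<mu>] fin ne subB by auto
  have "vec_sharp \<nu> (cmin (length \<nu> + 1) A) = cmin (length \<mu> + 1) (vec_sharp \<nu> ` A)"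
    by (rule sh_cmin[OF fin ne]) (use sub VecL in blast)
  then show ?thesis unfolding Pop_def using M M2 B A_def by simp
qed

lemma iter: "x \<in> Vec \<nu> \<Longrightarrow> (Pop (Vec \<nu>) ^^ t) x \<in> Vec \<nu> \<and>
   vec_sharp \<nu> ((Pop (Vec \<nu>) ^^ t) x) = (Pop (Vec \<mu>) ^^ t) (vec_sharp \<nu> x)"
proof (induction t)
  case 0 thus ?case by simp
next
  case (Suc t) thus ?case using Pop_sh by simp
qed

lemma sh_hts: "vec_sharp \<nu> (hts \<nu>) = hts \<mu>"
proof (rule nth_equalityI)
  have hl: "length (hts \<nu>) = length \<nu> + 1" by (simp add: hts_def)
  show "length (vec_sharp \<nu> (hts \<nu>)) = length (hts \<mu>)" using sh_len[OF hl] by (simp add: hts_def)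
  fix m assume "m < length (vec_sharp \<nu> (hts \<nu>))"
  then have m: "m \<le> length \<mu>" using sh_len[OF hl] by simp
  have i: "f0 + 1 + m < length \<nu> + 1" using m f0_lt by simp
  show "vec_sharp \<nu> (hts \<nu>) ! m = hts \<mu> ! m"
    using sh_nth[OF hl m] i m h_post[of m] by (simp add: hts_def)
qed

end

theorem corollary3p11:
  fixes \<nu> :: "bool list" and bb :: "int list" and t :: nat
  assumes "nsteps \<nu> \<ge> 1"
    and "bb \<in> Vec \<nu>"
    and "pop_sortable (Vec \<nu>) t bb"
  shows "pop_sortable (Vec (path_sharp \<nu>)) t (vec_sharp \<nu> bb)"
proof -
  interpret pth \<nu> using assms(1) by unfold_locales
  have "(Pop (Vec \<mu>) ^^ t) (vec_sharp \<nu> bb) = vec_sharp \<nu> ((Pop (Vec \<nu>) ^^ t) bb)"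
    using iter[OF assms(2)] by simp
  also have "\<dots> = vec_sharp \<nu> (hts \<nu>)" using assms(3) bottom_hts unfolding pop_sortable_def by simp
  also have "\<dots> = hts \<mu>" by (rule sh_hts)
  finally show ?thesis unfolding pop_sortable_def path_sharp_def using bottom_hts by simp
qed

end
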